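(* In $G_3$, the subsemigroup generated by $A=\{a,b,c\}$ is free of rank $3$ (i.e., two words over $A$, without inverses, represent the same element of $G_3$ only if they are identical).
   Context: Let $X=\{1,2,3\}$ and $T$ the ternary rooted tree with vertex set $X^*$. $\mathrm{Aut}(T)$ is the group of root-preserving automorphisms with product left-to-right: $(gh)(u)=h(g(u))$. Sections $g|_u$ are defined by $g(uv)=g(u)\,g|_u(v)$; we write $g=(g|_1,g|_2,g|_3)\lambda_g$ with $\lambda_g\in S_3$ the action on the first level, so $g(xw)=\lambda_g(x)g|_x(w)$; $e$ is the identity. $G_3=\langle a,b,c\rangle\le\mathrm{Aut}(T)$ with $a=(a,b,e)(1\,2)$, $b=(e,b,c)(2\,3)$, $c=(a,e,c)(3\,1)$. *)

theory Defs
  imports Main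
begin

text \<open>Alphabet X = {1,2,3}; vertices of the ternary tree are words over X.\<close>
datatype letter = X1 | X2 | X3

datatype gen = GA | GB | GC

text \<open>Action of the generators on the tree, following the wreath recursion
  a = (a,b,e)(1 2), b = (e,b,c)(2 3), c = (a,e,c)(3 1), i.e.
  g(x w) = lambda_g(x) g|_x(w).\<close>
fun act :: "gen \<Rightarrow> letter list \<Rightarrow> letter list" where
  "act g [] = []"
| "act GA (X1 # w) = X2 # act GA w"
| "act GA (X2 # w) = X1 # act GB w"
| "act GA (X3 # w) = X3 # w"
| "act GB (X1 # w) = X1 # w"
| "act GB (X2 # w) = X3 # act GB w"
| "act GB (X3 # w) = X2 # act GC w"
| "act GC (X1 # w) = X3 # act GA w"
| "act GC (X2 # w) = X2 # w"
| "act GC (X3 # w) = X1 # act GC w"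

text \<open>The element of Aut(T) represented by a positive word g1 g2 ... gn over {a,b,c},
  with the left-to-right product (gh)(u) = h(g(u)): g1 acts first.\<close>
fun word_act :: "gen list \<Rightarrow> letter list \<Rightarrow> letter list" where
  "word_act [] = id"
| "word_act (g # gs) = word_act gs \<circ> act g"

end

theory Submission
  imports Defs
begin

fun fixp :: "gen \<Rightarrow> letter" where
  "fixp GA = X3" | "fixp GB = X1" | "fixp GC = X2"

fun lab :: "letter \<Rightarrow> gen" where
  "lab X1 = GA" | "lab X2 = GB" | "lab X3 = GC"

fun mv :: "gen \<Rightarrow> letter \<Rightarrow> letter" where
  "mv GA X1 = X2" | "mv GA X2 = X1" | "mv GA X3 = X3"
| "mv GB X1 = X1" | "mv GB X2 = X3" | "mv GB X3 = X2"
| "mv GC X1 = X3" | "mv GC X2 = X2" | "mv GC X3 = X1"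

fun sec :: "gen list \<Rightarrow> letter \<Rightarrow> gen list" where
  "sec [] x = []"
| "sec (g # gs) x = (if fixp g = x then sec gs x else lab x # sec gs (mv g x))"

fun pos :: "gen list \<Rightarrow> letter \<Rightarrow> letter" where
  "pos [] x = x"
| "pos (g # gs) x = pos gs (mv g x)"

lemma act_cons: "act g (x # u) = mv g x # (if fixp g = x then u else act (lab x) u)"
  by (cases g; cases x; simp)

lemma mv_fix: "fixp g = x \<Longrightarrow> mv g x = x"
  by (cases g; cases x; simp)

lemma mv_nfix: "fixp g \<noteq> x \<Longrightarrow> fixp g \<noteq> mv g x"
  by (cases g; cases x; simp)

lemma mv_mv: "mv g (mv g x) = x"
  by (cases g; cases x; simp)

lemma fixp_inj: "fixp g = fixp h \<Longrightarrow> g = h"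
  by (cases g; cases h; simp)

lemma lab_inj: "lab x = lab y \<Longrightarrow> x = y"
  by (cases x; cases y; simp)

lemma wa_nil: "word_act v [] = []"
  by (induction v) auto

lemma wa_cons: "word_act v (x # u) = pos v x # word_act (sec v x) u"
proof (induction v arbitrary: x u)
  case Nil
  then show ?case by simp
next
  case (Cons g gs)
  show ?case
  proof (cases "fixp g = x")
    case True
    then show ?thesis using Cons mv_fix[OF True] by (simp add: act_cons)
  next
    case False
    then show ?thesis using Cons by (simp add: act_cons)
  qed
qed

lemma sec_eq: "word_act v = word_act w \<Longrightarrow> word_act (sec v x) = word_act (sec w x)"
proof
  fix u assume "word_act v = word_act w"
  then have "word_act v (x # u) = word_act w (x # u)" by simp
  then show "word_act (sec v x) u = word_act (sec w x) u" by (simp add: wa_cons)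
qed

lemma act_surj: "\<exists>u'. act g u' = u"
proof (induction u arbitrary: g)
  case Nil
  then show ?case by (intro exI[of _ "[]"]) simp
next
  case (Cons y u0)
  define x where "x = mv g y"
  have y: "mv g x = y" unfolding x_def by (simp add: mv_mv)
  show ?case
  proof (cases "fixp g = x")
    case True
    then show ?thesis using y by (intro exI[of _ "x # u0"]) (simp add: act_cons)
  next
    case False
    obtain u1 where "act (lab x) u1 = u0" using Cons by blast
    then show ?thesis using y False by (intro exI[of _ "x # u1"]) (simp add: act_cons)
  qed
qed

lemma cancel: "word_act (g # v) = word_act (g # w) \<Longrightarrow> word_act v = word_act w"
proof
  fix u assume h: "word_act (g # v) = word_act (g # w)"
  obtain u' where "act g u' = u" using act_surj by blast
  then show "word_act v u = word_act w u" using fun_cong[OF h, of u'] by simp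
qed

lemma sec_hd: "sec v x \<noteq> [] \<Longrightarrow> hd (sec v x) = lab x"
  by (induction v arbitrary: x) auto

lemma sec_nil: "sec v x = [] \<longleftrightarrow> (\<forall>g\<in>set v. fixp g = x)"
  by (induction v arbitrary: x) auto

lemma sec_len: "length (sec v x) \<le> length v"
  by (induction v arbitrary: x) (auto simp: le_SucI)

lemma sec_len_const: "\<forall>y\<in>set v. y = t \<Longrightarrow> fixp t \<noteq> x \<Longrightarrow> length (sec v x) = length v"
  by (induction v arbitrary: x) (auto simp: mv_nfix)

lemma act_ne_id: "word_act [g] \<noteq> id"
proof
  assume h: "word_act [g] = id"
  obtain x where "fixp g \<noteq> x" by (cases g) (auto intro: letter.exhaust)
  then have "mv g x \<noteq> x" by (cases g; cases x; auto)
  moreover have "word_act [g] [x] = [mv g x]" by (simp add: act_cons)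
  ultimately show False using h by simp
qed

lemma third: "fixp g \<noteq> fixp h \<Longrightarrow> \<exists>z. z \<noteq> fixp g \<and> z \<noteq> fixp h \<and> mv g z = fixp h \<and> mv h z = fixp g \<and> mv g (fixp h) = z \<and> mv h (fixp g) = z"
  by (cases g; cases h; auto)

lemma free_main: "length v + length w = N \<Longrightarrow> word_act v = word_act w \<Longrightarrow> v = w"
proof (induction N arbitrary: v w rule: less_induct)
  case (less N)
  have IH: "\<And>v w. length v + length w < N \<Longrightarrow> word_act v = word_act w \<Longrightarrow> v = w"
    using less.IH by blast
  have inner: "\<And>u. length u \<le> N \<Longrightarrow> u \<noteq> [] \<Longrightarrow> word_act u = id \<Longrightarrow> \<forall>y\<in>set u. y = hd u"
  proof -
    fix u :: "gen list" assume l: "length u \<le> N" and ne: "u \<noteq> []" and idu: "word_act u = id"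
    obtain g0 u' where u: "u = g0 # u'" using ne by (cases u) auto
    have "word_act (sec u (fixp g0)) = word_act (sec [] (fixp g0))"
      using sec_eq[of u "[]"] idu by simp
    moreover have "length [] + length (sec u (fixp g0)) < N"
      using sec_len[of u' "fixp g0"] l u by simp
    ultimately have "[] = sec u (fixp g0)" using IH by simp
    then have "\<forall>y\<in>set u'. fixp y = fixp g0" using u sec_nil[of u' "fixp g0"] by simp
    then show "\<forall>y\<in>set u. y = hd u" using u fixp_inj by auto
  qed
  have empty_case: False if w: "w \<noteq> []" "word_act w = id" "length w = N" for w
  proof -
    obtain g w' where ww: "w = g # w'" using w by (cases w) auto
    have allg: "\<forall>y\<in>set w. y = g" using inner[of w] w ww by auto
    show False
    proof (cases w')
      case Nil
      then show ?thesis using w ww act_ne_id by simp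
    next
      case (Cons g' w'')
      then have g': "g' = g" using allg ww by simp
      obtain q where q: "fixp g \<noteq> q" by (cases g) (auto intro: letter.exhaust)
      have q2: "fixp g \<noteq> mv g q" using mv_nfix[OF q] .
      have useq: "sec w q = lab q # lab (mv g q) # sec w'' (mv g (mv g q))"
        using ww Cons g' q q2 by simp
      have idu: "word_act (sec w q) = id" using sec_eq[of w "[]" q] w by simp
      have "\<forall>y\<in>set (sec w q). y = hd (sec w q)"
        using inner[of "sec w q"] sec_len[of w q] w idu useq by simp
      then have "lab (mv g q) = lab q" using useq by simp
      then have "mv g q = q" using lab_inj by blast
      then show False using q by (cases g; cases q; simp)
    qed
  qed
  show ?case
  proof (cases v)
    case Nil
    show ?thesis
    proof (cases w)
      case Nil then show ?thesis using \<open>v = []\<close> by simp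
    next
      case (Cons h w')
      have "word_act w = id" using less.prems \<open>v = []\<close> by (simp add: id_def)
      then show ?thesis using empty_case[of w] less.prems \<open>v = []\<close> Cons by simp
    qed
  next
    case (Cons g v')
    note vv = this
    show ?thesis
    proof (cases w)
      case Nil
      have "word_act v = id" using less.prems Nil by (simp add: id_def)
      then show ?thesis using empty_case[of v] less.prems vv Nil by simp
    next
      case (Cons h w')
      note ww = this
      show ?thesis
      proof (cases "g = h")
        case True
        then have "word_act v' = word_act w'" using cancel less.prems vv ww by blast
        then have "v' = w'" using IH less.prems vv ww by simp
        then show ?thesis using vv ww True by simp
      next
        case False
        define p where "p = fixp g"
        define q where "q = fixp h"
        have pq: "p \<noteq> q" using False fixp_inj p_def q_def by blast
        obtain z where z: "z \<noteq> p" "z \<noteq> q" "mv g z = q" "mv h z = p" "mv g q = z" "mv h p = z"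
          using third[of g h] pq p_def q_def by blast
        have s1: "sec v z = lab z # sec v' q" using vv z p_def by simp
        have s2: "sec w z = lab z # sec w' p" using ww z q_def by simp
        have "word_act (sec v z) = word_act (sec w z)" using sec_eq less.prems by blast
        then have "word_act (sec v' q) = word_act (sec w' p)" using s1 s2 cancel by metis
        moreover have "length (sec v' q) + length (sec w' p) < N"
          using sec_len[of v' q] sec_len[of w' p] less.prems vv ww by simp
        ultimately have eq: "sec v' q = sec w' p" using IH by blast
        have "sec v' q = []"
        proof (rule ccontr)
          assume ne: "sec v' q \<noteq> []"
          then have "hd (sec v' q) = lab q" by (rule sec_hd)
          moreover have "hd (sec w' p) = lab p" using ne eq sec_hd by metis
          ultimately show False using eq pq lab_inj by metis
        qed
        then have a1: "\<forall>y\<in>set v'. y = h" and a2: "\<forall>y\<in>set w'. y = g"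
          using eq sec_nil[of v' q] sec_nil[of w' p] fixp_inj p_def q_def by auto
        have l1: "length (sec v p) = length v'"
          using vv p_def sec_len_const[OF a1, of p] pq q_def by simp
        have l2: "length (sec w p) = Suc (length w')"
          using ww q_def pq z sec_len_const[OF a2, of z] p_def by simp
        have l3: "length (sec v q) = Suc (length v')"
          using vv p_def pq z sec_len_const[OF a1, of z] q_def by simp
        have l4: "length (sec w q) = length w'"
          using ww q_def sec_len_const[OF a2, of q] pq p_def by simp
        have "word_act (sec v p) = word_act (sec w p)" using sec_eq less.prems by blast
        moreover have "length (sec v p) + length (sec w p) < N"
          using l1 l2 less.prems vv ww by simp
        ultimately have e1: "sec v p = sec w p" using IH by blast
        have "word_act (sec v q) = word_act (sec w q)" using sec_eq less.prems by blast
        moreover have "length (sec v q) + length (sec w q) < N"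
          using l3 l4 less.prems vv ww by simp
        ultimately have e2: "sec v q = sec w q" using IH by blast
        show ?thesis using e1 e2 l1 l2 l3 l4 by simp
      qed
    qed
  qed
qed

theorem theorem5p2:
  fixes v w :: "gen list"
  assumes "v \<noteq> []" and "w \<noteq> []"
    and "word_act v = word_act w"
  shows "v = w"
  using free_main[OF refl assms(3)] .

end
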